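(* Under the Lyapunov condition with exponent $\delta>0$, set $s=2+\delta$ and for $n\in\mathbb{N}$, $j\in\{0,\ldots,n-1\}$ define \[ \widetilde{\xi}^{(n)}_j=\xi_j\mathbf{1}\{|\xi_j|\le n^{1/s}\}-\mathbb{E}\big[\xi_j\mathbf{1}\{|\xi_j|\le n^{1/s}\}\big],\qquad \widetilde{\lambda}^{(n)}_k=\sum_{j=0}^{n-1}\widetilde{\xi}^{(n)}_j\omega_n^{kj}\quad (1\le k\le n-1). \] Then \[ \mathbb{P}\Big(\lim_{n\to\infty}\max_{1\le k\le n-1}\big||\lambda^{(n)}_k|-|\widetilde{\lambda}^{(n)}_k|\big|=0\Big)=1. \]
   Context: Lyapunov condition: $(\xi_j)_{j\in\mathbb{N}_0}$ is a sequence of i.i.d. non-degenerate real random variables on a probability space $(\Omega,\mathcal{F},\mathbb{P})$ with $\mathbb{E}[\xi_0]=0$, $\mathbb{E}[\xi_0^2]=1$, and there is $\delta>0$ with $\mathbb{E}[|\xi_0|^{2+\delta}]<\infty$. With $\omega_n=\exp(2\pi\mathsf{i}/n)$, $\lambda^{(n)}_k=\sum_{j=0}^{n-1}\xi_j\omega_n^{kj}$. *)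

theory Defs
  imports "HOL-Probability.Probability"
begin

definition omega_n :: "nat \<Rightarrow> complex" where
  "omega_n n = cis (2 * pi / real n)"

definition dft_coeff :: "(nat \<Rightarrow> real) \<Rightarrow> nat \<Rightarrow> nat \<Rightarrow> complex" where
  "dft_coeff x n k = (\<Sum>j<n. complex_of_real (x j) * omega_n n ^ (k * j))"

definition trunc_centered ::
  "'a measure \<Rightarrow> (nat \<Rightarrow> 'a \<Rightarrow> real) \<Rightarrow> real \<Rightarrow> nat \<Rightarrow> nat \<Rightarrow> 'a \<Rightarrow> real" where
  "trunc_centered M \<xi> s n j \<omega> =
     (if \<bar>\<xi> j \<omega>\<bar> \<le> real n powr (1 / s) then \<xi> j \<omega> else 0)
     - (\<integral>\<omega>'. (if \<bar>\<xi> j \<omega>'\<bar> \<le> real n powr (1 / s) then \<xi> j \<omega>' else 0) \<partial>M)"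

definition max_dev ::
  "'a measure \<Rightarrow> (nat \<Rightarrow> 'a \<Rightarrow> real) \<Rightarrow> real \<Rightarrow> nat \<Rightarrow> 'a \<Rightarrow> real" where
  "max_dev M \<xi> s n \<omega> =
     (if n < 2 then 0 else
       Max ((\<lambda>k. \<bar>cmod (dft_coeff (\<lambda>j. \<xi> j \<omega>) n k)
                 - cmod (dft_coeff (\<lambda>j. trunc_centered M \<xi> s n j \<omega>) n k)\<bar>) ` {1..n-1}))"

end

theory Submission
  imports Defs
begin

lemma root_sum_zero:
  assumes "1 \<le> k" "k < n"
  shows "(\<Sum>j<n. omega_n n ^ (k * j)) = 0"
proof -
  have n0: "real n > 0" using assms by simp
  have pw: "omega_n n ^ n = 1"
    using n0 unfolding omega_n_def Complex.DeMoivre by simp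
  have ne: "omega_n n ^ k \<noteq> 1"
  proof
    assume "omega_n n ^ k = 1"
    hence "cis (real k * (2 * pi / real n)) = 1" by (simp add: omega_n_def Complex.DeMoivre)
    hence "cos (real k * (2 * pi / real n)) = 1" by (metis complex.sel(1) cis.simps(1) one_complex.simps(1))
    then obtain m :: int where m: "real k * (2 * pi / real n) = real_of_int m * 2 * pi" using cos_one_2pi_int by blast
    hence "real k = m * real n" using n0 by (simp add: field_simps)
    hence "int k = m * int n" by (metis of_int_eq_iff of_int_mult of_int_of_nat_eq)
    hence "int n dvd int k" by simp
    hence "n dvd k" by presburger
    thus False using assms by (auto dest: dvd_imp_le)
  qed
  have e: "(\<Sum>j<n. omega_n n ^ (k * j)) = (\<Sum>j<n. (omega_n n ^ k) ^ j)" by (simp add: power_mult)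
  have "(omega_n n ^ k) ^ n = 1" by (metis pw power_mult mult.commute power_one)
  hence "(\<Sum>j<n. (omega_n n ^ k) ^ j) = 0" using ne by (simp add: sum_gp_strict)
  thus ?thesis using e by simp
qed


lemma count_le: "0 \<le> (x::real) \<Longrightarrow> (\<Sum>j<N. if real j < x then 1 else 0) \<le> min (real N) (x + 1)"
proof (induction N)
  case 0 thus ?case by simp
next
  case (Suc N)
  thus ?case by (auto simp: min_def split: if_splits)
qed


lemma powr_conv:
  assumes "0 < (s::real)" "0 \<le> t" "0 \<le> a"
  shows "t powr (1/s) < a \<longleftrightarrow> t < a powr s"
proof
  assume h: "t powr (1/s) < a"
  have "t = (t powr (1/s)) powr s" using assms by (simp add: powr_powr)
  also have "\<dots> < a powr s" using h assms by (intro powr_less_mono2) auto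
  finally show "t < a powr s" .
next
  assume h: "t < a powr s"
  have "t powr (1/s) < (a powr s) powr (1/s)" using h assms by (intro powr_less_mono2) auto
  also have "\<dots> = a" using assms by (simp add: powr_powr)
  finally show "t powr (1/s) < a" .
qed

theorem lemma2p2:
  fixes M :: "'a measure" and \<xi> :: "nat \<Rightarrow> 'a \<Rightarrow> real" and \<delta> :: real
  assumes "prob_space M"
    and rv: "\<And>j. \<xi> j \<in> borel_measurable M"
    and indep: "prob_space.indep_vars M (\<lambda>_. borel) \<xi> UNIV"
    and ident: "\<And>j. distr M borel (\<xi> j) = distr M borel (\<xi> 0)"
    and nondeg: "\<not> (\<exists>c. AE \<omega> in M. \<xi> 0 \<omega> = c)"
    and mean: "integrable M (\<xi> 0)" "(\<integral>\<omega>. \<xi> 0 \<omega> \<partial>M) = 0"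
    and var: "integrable M (\<lambda>\<omega>. (\<xi> 0 \<omega>)\<^sup>2)" "(\<integral>\<omega>. (\<xi> 0 \<omega>)\<^sup>2 \<partial>M) = 1"
    and delta: "\<delta> > 0"
    and lyap: "integrable M (\<lambda>\<omega>. \<bar>\<xi> 0 \<omega>\<bar> powr (2 + \<delta>))"
  shows "AE \<omega> in M. (\<lambda>n. max_dev M \<xi> (2 + \<delta>) n \<omega>) \<longlonglongrightarrow> 0"
proof -
  interpret prob_space M by fact
  define s where "s = 2 + \<delta>"
  have s0: "0 < s" using delta by (simp add: s_def)
  define X where "X = (\<lambda>\<omega>. \<bar>\<xi> 0 \<omega>\<bar> powr s)"
  have intX: "integrable M X" using lyap by (simp add: X_def s_def)
  have [measurable]: "\<xi> j \<in> borel_measurable M" for j using rv by simp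
  have Xm[measurable]: "X \<in> borel_measurable M" unfolding X_def by measurable
  define A where "A = (\<lambda>j::nat. {\<omega>\<in>space M. real j powr (1/s) < \<bar>\<xi> j \<omega>\<bar>})"
  define B where "B = (\<lambda>j::nat. {\<omega>\<in>space M. real j < X \<omega>})"
  have Am[measurable]: "A j \<in> sets M" for j unfolding A_def by measurable
  have Bm[measurable]: "B j \<in> sets M" for j unfolding B_def by measurable
  have AB: "measure M (A j) = measure M (B j)" for j
  proof -
    have S: "{x::real. real j powr (1/s) < \<bar>x\<bar>} \<in> sets borel" by measurable
    have "measure M (A j) = measure (distr M borel (\<xi> j)) {x. real j powr (1/s) < \<bar>x\<bar>}"
      using measure_distr[OF rv S] unfolding A_def by (simp add: vimage_def Int_def conj_commute)
    also have "\<dots> = measure (distr M borel (\<xi> 0)) {x. real j powr (1/s) < \<bar>x\<bar>}" by (simp only: ident[of j])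
    also have "\<dots> = measure M {\<omega>\<in>space M. real j powr (1/s) < \<bar>\<xi> 0 \<omega>\<bar>}"
      using measure_distr[OF rv S] by (simp add: vimage_def Int_def conj_commute)
    also have "{\<omega>\<in>space M. real j powr (1/s) < \<bar>\<xi> 0 \<omega>\<bar>} = B j"
      unfolding B_def X_def using powr_conv[OF s0] by auto
    finally show ?thesis .
  qed
  have sumB: "summable (\<lambda>j. measure M (B j))"
  proof (rule summableI_nonneg_bounded)
    fix N
    have "(\<Sum>j<N. measure M (B j)) = (\<integral>\<omega>. (\<Sum>j<N. indicator (B j) \<omega>) \<partial>M)"
    proof -
      have "(\<integral>\<omega>. (\<Sum>j<N. indicator (B j) \<omega>) \<partial>M) = (\<Sum>j<N. (\<integral>\<omega>. indicator (B j) \<omega> \<partial>M) :: real)"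
        by (rule Bochner_Integration.integral_sum) (intro integrable_real_indicator Bm; simp add: emeasure_finite less_top[symmetric])
      also have "\<dots> = (\<Sum>j<N. measure M (B j))" using Bm by (simp add: Int_absorb2 sets.sets_into_space)
      finally show ?thesis by simp
    qed
    also have "\<dots> \<le> (\<integral>\<omega>. X \<omega> + 1 \<partial>M)"
    proof (rule integral_mono)
      show "integrable M (\<lambda>\<omega>. (\<Sum>j<N. indicator (B j) \<omega>) :: real)" by (intro Bochner_Integration.integrable_sum integrable_real_indicator Bm; simp add: emeasure_finite less_top[symmetric])
      show "integrable M (\<lambda>\<omega>. X \<omega> + 1)" using intX by simp
      fix \<omega> assume w: "\<omega> \<in> space M"
      have "(\<Sum>j<N. indicator (B j) \<omega>) = (\<Sum>j<N. if real j < X \<omega> then 1 else 0 :: real)"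
        using w unfolding B_def by (intro sum.cong) (auto simp: indicator_def)
      also have "\<dots> \<le> min (real N) (X \<omega> + 1)" by (rule count_le) (simp add: X_def)
      finally show "(\<Sum>j<N. indicator (B j) \<omega>) \<le> X \<omega> + 1" by simp
    qed
    finally show "(\<Sum>j<N. measure M (B j)) \<le> (\<integral>\<omega>. X \<omega> + 1 \<partial>M)" .
  qed simp
  have AE1: "AE \<omega> in M. eventually (\<lambda>j. \<omega> \<in> space M - A j) sequentially"
    by (rule borel_cantelli_AE1) (auto simp: AB sumB emeasure_finite less_top[symmetric])
  define c where "c = (\<lambda>n j. \<integral>\<omega>'. (if \<bar>\<xi> j \<omega>'\<bar> \<le> real n powr (1 / s) then \<xi> j \<omega>' else 0) \<partial>M)"
  have cj: "c n j = c n 0" for n j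
  proof -
    define f where "f = (\<lambda>x::real. if \<bar>x\<bar> \<le> real n powr (1 / s) then x else 0)"
    have fm: "f \<in> borel_measurable borel" unfolding f_def by measurable
    have "c n j = integral\<^sup>L (distr M borel (\<xi> j)) f"
      unfolding c_def f_def by (rule integral_distr[OF rv fm, unfolded f_def, symmetric])
    also have "\<dots> = integral\<^sup>L (distr M borel (\<xi> 0)) f" by (simp only: ident[of j])
    also have "\<dots> = c n 0"
      unfolding c_def f_def by (rule integral_distr[OF rv fm, unfolded f_def])
    finally show ?thesis .
  qed
  show ?thesis
    using AE1 AE_space
  proof eventually_elim
    case (elim \<omega>)
    from elim(1) obtain J where J: "\<And>j. j \<ge> J \<Longrightarrow> \<bar>\<xi> j \<omega>\<bar> \<le> real j powr (1/s)"
      unfolding eventually_sequentially A_def using elim(2) by (auto simp: not_less)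
    define b where "b = (\<Sum>j<J. \<bar>\<xi> j \<omega>\<bar>)"
    have b0: "0 \<le> b" unfolding b_def by (simp add: sum_nonneg)
    have bj: "\<bar>\<xi> j \<omega>\<bar> \<le> b" if "j < J" for j
      unfolding b_def using that by (intro member_le_sum) auto
    define N0 where "N0 = max (max J 2) (nat \<lceil>b powr s\<rceil>)"
    have key: "max_dev M \<xi> s n \<omega> = 0" if n: "n \<ge> N0" for n
    proof -
      have n2: "n \<ge> 2" using n unfolding N0_def by simp
      have small: "\<bar>\<xi> j \<omega>\<bar> \<le> real n powr (1/s)" if j: "j < n" for j
      proof (cases "j \<ge> J")
        case True
        have "\<bar>\<xi> j \<omega>\<bar> \<le> real j powr (1/s)" using J True .
        also have "\<dots> \<le> real n powr (1/s)" using j s0 by (intro powr_mono2) auto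
        finally show ?thesis .
      next
        case False
        have "\<bar>\<xi> j \<omega>\<bar> \<le> b" using bj False by simp
        also have "b = (b powr s) powr (1/s)" using b0 s0 by (simp add: powr_powr)
        also have "\<dots> \<le> real n powr (1/s)"
        proof (intro powr_mono2)
          have "b powr s \<le> real (nat \<lceil>b powr s\<rceil>)" by linarith
          also have "\<dots> \<le> real n" using n unfolding N0_def by (metis max.bounded_iff of_nat_mono)
          finally show "b powr s \<le> real n" .
        qed (use s0 in auto)
        finally show ?thesis .
      qed
      have tc: "trunc_centered M \<xi> s n j \<omega> = \<xi> j \<omega> - c n 0" if "j < n" for j
        using small[OF that] cj[of n j] unfolding trunc_centered_def c_def by simp
      have eq: "dft_coeff (\<lambda>j. trunc_centered M \<xi> s n j \<omega>) n k = dft_coeff (\<lambda>j. \<xi> j \<omega>) n k"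
        if k: "k \<in> {1..n-1}" for k
      proof -
        have "dft_coeff (\<lambda>j. trunc_centered M \<xi> s n j \<omega>) n k
            = (\<Sum>j<n. complex_of_real (\<xi> j \<omega>) * omega_n n ^ (k * j) - complex_of_real (c n 0) * omega_n n ^ (k * j))"
          unfolding dft_coeff_def by (intro sum.cong) (auto simp: tc algebra_simps)
        also have "\<dots> = dft_coeff (\<lambda>j. \<xi> j \<omega>) n k - complex_of_real (c n 0) * (\<Sum>j<n. omega_n n ^ (k * j))"
          unfolding dft_coeff_def by (simp add: sum_subtractf sum_distrib_left)
        also have "(\<Sum>j<n. omega_n n ^ (k * j)) = 0" using k n2 by (intro root_sum_zero) auto
        finally show ?thesis by simp
      qed
      have "(\<lambda>k. \<bar>cmod (dft_coeff (\<lambda>j. \<xi> j \<omega>) n k) - cmod (dft_coeff (\<lambda>j. trunc_centered M \<xi> s n j \<omega>) n k)\<bar>) ` {1..n-1} = {0}"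
        using n2 eq by (auto simp: image_iff) (rule exI[of _ 1]; simp)
      thus ?thesis using n2 unfolding max_dev_def by simp
    qed
    show ?case unfolding s_def[symmetric]
      by (rule tendsto_eventually) (use key in \<open>auto simp: eventually_sequentially\<close>)
  qed
qed

end
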